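(* Let $A\subset\mathbb{R}^n$ and let $\mu\in M(\mathbb{R}^n)$ be a finite complex Borel measure whose spectrum (support of $\hat\mu$) lies in $A$. Suppose there is a $k$-dimensional linear subspace $V\subset\mathbb{R}^n$ such that for every $a\in\mathbb{R}^n$ the set $(V+a)\cap A$ is a Riesz set on $V+a$. Then $\mu(F)=0$ for every Borel set $F\subset\mathbb{R}^n$ with $\lambda_V(p_V(F))=0$.
   Context: A set $B\subset\mathbb{R}^d$ is a Riesz set if every finite Borel measure on $\mathbb{R}^d$ whose spectrum is contained in $B$ is absolutely continuous with respect to Lebesgue measure. A subset of an affine $k$-plane $V+a$ is called a Riesz set on $V+a$ if, after translating by $-a$ and identifying $V$ with $\mathbb{R}^k$ by a linear isometry, it is a Riesz set in $\mathbb{R}^k$. $p_V$ is the orthogonal projection onto $V$ and $\lambda_V$ is $k$-dimensional Lebesgue measure on $V$. *)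

theory Defs
  imports "HOL-Analysis.Analysis"
begin

text \<open>A finite complex Borel measure on a Euclidean space is represented as
  h \<cdot> M, where M is a finite positive Borel measure and h is an M-integrable
  complex function (every finite complex Borel measure has this form, e.g.
  with M = |mu| and |h| = 1 by the polar decomposition).\<close>

definition finite_cmeasure :: "'a::euclidean_space measure \<Rightarrow> ('a \<Rightarrow> complex) \<Rightarrow> bool" where
  "finite_cmeasure M h \<longleftrightarrow> sets M = sets borel \<and> finite_measure M \<and> integrable M h"

definition cmeasure_val :: "'a::euclidean_space measure \<Rightarrow> ('a \<Rightarrow> complex) \<Rightarrow> 'a set \<Rightarrow> complex" where
  "cmeasure_val M h F = (LINT x:F|M. h x)"

definition cfourier :: "'a::euclidean_space measure \<Rightarrow> ('a \<Rightarrow> complex) \<Rightarrow> 'a \<Rightarrow> complex" where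
  "cfourier M h \<xi> = (LINT x|M. exp (- (2 * pi * \<i>) * complex_of_real (\<xi> \<bullet> x)) * h x)"

definition cspectrum :: "'a::euclidean_space measure \<Rightarrow> ('a \<Rightarrow> complex) \<Rightarrow> 'a set" where
  "cspectrum M h = closure {\<xi>. cfourier M h \<xi> \<noteq> 0}"

definition cabs_cont :: "'a::euclidean_space measure \<Rightarrow> ('a \<Rightarrow> complex) \<Rightarrow> bool" where
  "cabs_cont M h \<longleftrightarrow> (\<forall>F \<in> sets borel. emeasure lborel F = 0 \<longrightarrow> cmeasure_val M h F = 0)"

definition riesz_set :: "'a::euclidean_space set \<Rightarrow> bool" where
  "riesz_set B \<longleftrightarrow> (\<forall>M h. finite_cmeasure M h \<and> cspectrum M h \<subseteq> B \<longrightarrow> cabs_cont M h)"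

definition orth_proj :: "'a::euclidean_space set \<Rightarrow> 'a \<Rightarrow> 'a" where
  "orth_proj V x = (THE v. v \<in> V \<and> (\<forall>w\<in>V. (x - v) \<bullet> w = 0))"

end

theory Submission
  imports Defs
begin


inductive_set trigp :: "('n::euclidean_space \<Rightarrow> complex) set" where
  ex: "(\<lambda>x. exp (2 * pi * \<i> * complex_of_real (\<xi> \<bullet> x))) \<in> trigp"
| add: "f \<in> trigp \<Longrightarrow> g \<in> trigp \<Longrightarrow> (\<lambda>x. f x + g x) \<in> trigp"
| scal: "f \<in> trigp \<Longrightarrow> (\<lambda>x. c * f x) \<in> trigp"

lemma trigp_const: "(\<lambda>x. c) \<in> trigp"
proof -
  have "(\<lambda>x. c * exp (2 * pi * \<i> * complex_of_real ((0::'a) \<bullet> x))) \<in> (trigp :: ('a::euclidean_space \<Rightarrow> complex) set)"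
    by (intro trigp.scal trigp.ex)
  then show ?thesis by simp
qed

lemma trigp_mult_ex:
  assumes "g \<in> trigp"
  shows "(\<lambda>x. exp (2 * pi * \<i> * complex_of_real (\<xi> \<bullet> x)) * g x) \<in> trigp"
  using assms
proof induction
  case (ex \<eta>)
  have "(\<lambda>x. exp (2 * pi * \<i> * complex_of_real ((\<xi> + \<eta>) \<bullet> x))) \<in> trigp" by (rule trigp.ex)
  moreover have "(\<lambda>x. exp (2 * pi * \<i> * complex_of_real ((\<xi> + \<eta>) \<bullet> x))) =
     (\<lambda>x. exp (2 * pi * \<i> * complex_of_real (\<xi> \<bullet> x)) * exp (2 * pi * \<i> * complex_of_real (\<eta> \<bullet> x)))"
    by (auto simp: inner_add_left distrib_left exp_add)
  ultimately show ?case by simp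
next
  case (add f g)
  then show ?case using trigp.add[OF add.IH] by (simp add: distrib_left)
next
  case (scal f c)
  then show ?case using trigp.scal[OF scal.IH, of c] by (simp add: ac_simps)
qed

lemma trigp_mult:
  assumes "f \<in> trigp" "g \<in> trigp"
  shows "(\<lambda>x. f x * g x) \<in> trigp"
  using assms(1)
proof induction
  case (ex \<xi>) then show ?case using trigp_mult_ex[OF assms(2)] by simp
next
  case (add f1 f2)
  then show ?case using trigp.add[OF add.IH] by (simp add: distrib_right)
next
  case (scal f c)
  then show ?case using trigp.scal[OF scal.IH, of c] by (simp add: ac_simps)
qed

lemma trigp_sum:
  assumes "finite S" "\<And>i. i \<in> S \<Longrightarrow> f i \<in> trigp"
  shows "(\<lambda>x. \<Sum>i\<in>S. f i x) \<in> trigp"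
  using assms
proof (induction S rule: finite_induct)
  case empty then show ?case using trigp_const[of 0] by simp
next
  case (insert a S)
  then show ?case using trigp.add[of "f a" "\<lambda>x. \<Sum>i\<in>S. f i x"] by simp
qed

lemma trigp_props:
  assumes "f \<in> trigp"
  shows "continuous_on UNIV f \<and> (\<exists>B. \<forall>x. norm (f x) \<le> B)"
  using assms
proof induction
  case (ex \<xi>)
  have "norm (exp (2 * pi * \<i> * complex_of_real (\<xi> \<bullet> x))) \<le> 1" for x
    by (simp add: norm_exp)
  moreover have "continuous_on UNIV (\<lambda>x. exp (2 * pi * \<i> * complex_of_real (\<xi> \<bullet> x)))"
    by (intro continuous_intros)
  ultimately show ?case by blast
next
  case (add f g)
  then obtain B1 B2 where "\<forall>x. norm (f x) \<le> B1" "\<forall>x. norm (g x) \<le> B2" by auto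
  then have "\<forall>x. norm (f x + g x) \<le> B1 + B2" by (meson add_mono norm_triangle_le)
  with add show ?case by (auto intro: continuous_intros)
next
  case (scal f c)
  then obtain B1 where B: "\<forall>x. norm (f x) \<le> B1" by auto
  then have "\<forall>x. norm (c * f x) \<le> norm c * B1" by (simp add: norm_mult mult_left_mono)
  with scal show ?case by (auto intro: continuous_intros)
qed



definition uu :: "real \<Rightarrow> 'n::euclidean_space \<Rightarrow> 'n" where
  "uu w x = (\<Sum>i\<in>Basis. sin (w * (x \<bullet> i)) *\<^sub>R i)"

lemma trigp_sin:
  fixes a :: "'n::euclidean_space"
  shows "(\<lambda>x. complex_of_real (sin (a \<bullet> x))) \<in> (trigp :: ('n \<Rightarrow> complex) set)"
proof -
  let ?b = "(1/(2*pi)) *\<^sub>R a"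
  have eq: "(1/(2*\<i>)) * exp (2 * pi * \<i> * complex_of_real (?b \<bullet> x)) + (-(1/(2*\<i>))) * exp (2 * pi * \<i> * complex_of_real ((-?b) \<bullet> x))
     = complex_of_real (sin (a \<bullet> x))" for x
  proof -
    have e1: "2 * pi * \<i> * complex_of_real (?b \<bullet> x) = \<i> * complex_of_real (a \<bullet> x)"
      by (simp add: field_simps)
    have e2: "2 * pi * \<i> * complex_of_real ((-?b) \<bullet> x) = -(\<i> * complex_of_real (a \<bullet> x))"
      by (simp add: field_simps)
    show ?thesis unfolding e1 e2
      by (simp add: sin_of_real[symmetric] sin_exp_eq field_simps)
  qed
  have "(\<lambda>x. (1/(2*\<i>)) * exp (2 * pi * \<i> * complex_of_real (?b \<bullet> x)) + (-(1/(2*\<i>))) * exp (2 * pi * \<i> * complex_of_real ((-?b) \<bullet> x))) \<in> trigp"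
    by (intro trigp.add trigp.scal trigp.ex)
  then show ?thesis by (simp only: eq)
qed

lemma trigp_poly:
  assumes "real_polynomial_function q"
  shows "(\<lambda>x. complex_of_real (q (uu w x))) \<in> (trigp :: ('n::euclidean_space \<Rightarrow> complex) set)"
  using assms
proof induction
  case (linear f)
  then have lf: "linear f" by (simp add: bounded_linear.linear)
  have "(\<lambda>x. \<Sum>i\<in>Basis. complex_of_real (f i) * complex_of_real (sin ((w *\<^sub>R i) \<bullet> x))) \<in> (trigp :: ('n \<Rightarrow> complex) set)"
    by (intro trigp_sum trigp.scal trigp_sin) auto
  moreover have "(\<lambda>x. complex_of_real (f (uu w x))) = (\<lambda>x. \<Sum>i\<in>Basis. complex_of_real (f i) * complex_of_real (sin ((w *\<^sub>R i) \<bullet> x)))"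
  proof
    fix x :: 'n
    have "f (uu w x) = (\<Sum>i\<in>Basis. sin (w * (x \<bullet> i)) * f i)"
      unfolding uu_def using lf by (simp add: linear_sum linear_scale)
    then show "complex_of_real (f (uu w x)) = (\<Sum>i\<in>Basis. complex_of_real (f i) * complex_of_real (sin ((w *\<^sub>R i) \<bullet> x)))"
      by (simp add: inner_commute mult.commute)
  qed
  ultimately show ?case by simp
next
  case (const c)
  show ?case by (rule trigp_const)
next
  case (add f g)
  then show ?case using trigp.add[OF add.IH] by simp
next
  case (mult f g)
  then show ?case using trigp_mult[OF mult.IH] by simp
qed



lemma int_bmul:
  fixes g f :: "'a \<Rightarrow> complex"
  assumes "integrable M g" "f \<in> borel_measurable M" "\<And>x. norm (f x) \<le> B"
  shows "integrable M (\<lambda>x. f x * g x)"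
proof (rule Bochner_Integration.integrable_bound[of _ "\<lambda>x. complex_of_real \<bar>B\<bar> * g x"])
  show "integrable M (\<lambda>x. complex_of_real \<bar>B\<bar> * g x)" using assms(1) by simp
  show "(\<lambda>x. f x * g x) \<in> borel_measurable M"
    using assms(1,2) by (simp add: borel_measurable_integrable)
  show "AE x in M. norm (f x * g x) \<le> norm (complex_of_real \<bar>B\<bar> * g x)"
    using assms(3) by (auto simp: norm_mult intro!: mult_right_mono order.trans[OF _ abs_ge_self])
qed

locale fz =
  fixes M :: "'n::euclidean_space measure" and g :: "'n \<Rightarrow> complex"
  assumes sM: "sets M = sets borel" and fin: "finite_measure M" and ig: "integrable M g"
    and hz: "\<And>\<xi>. (LINT x|M. exp (- (2 * pi * \<i>) * complex_of_real (\<xi> \<bullet> x)) * g x) = 0"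
begin

lemma meas: "f \<in> borel_measurable borel \<Longrightarrow> f \<in> borel_measurable M"
  by (simp add: measurable_cong_sets[OF sM refl])

lemma trig_int: "Q \<in> trigp \<Longrightarrow> integrable M (\<lambda>x. Q x * g x)"
  using trigp_props[of Q] by (auto intro!: int_bmul[OF ig] meas borel_measurable_continuous_onI)

lemma trig_int0: "Q \<in> trigp \<Longrightarrow> (LINT x|M. Q x * g x) = 0"
proof (induction rule: trigp.induct)
  case (ex \<xi>)
  have "exp (2 * pi * \<i> * complex_of_real (\<xi> \<bullet> x)) = exp (- (2 * pi * \<i>) * complex_of_real ((-\<xi>) \<bullet> x))" for x
    by simp
  then show ?case using hz[of "-\<xi>"] by simp
next
  case (add f g')
  then show ?case using trig_int by (simp add: distrib_right)
next
  case (scal f c)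
  then show ?case by (simp add: mult.assoc)
qed


abbreviation bx :: "real \<Rightarrow> 'n set" where "bx R \<equiv> cbox (-(R *\<^sub>R One)) (R *\<^sub>R One)"

lemma bx_mem: "x \<in> bx R \<longleftrightarrow> (\<forall>i\<in>Basis. \<bar>x \<bullet> i\<bar> \<le> R)"
  by (auto simp: mem_box inner_Basis abs_le_iff)

lemma bx_sets[measurable]: "- bx R \<in> sets M"
  using sM by (auto intro: borel_closed)

lemma tail:
  assumes "0 < \<epsilon>"
  shows "\<exists>R>0. (LINT x|M. indicator (- bx R) x * norm (g x)) < \<epsilon>"
proof -
  let ?s = "\<lambda>n::nat. \<lambda>x. indicator (- bx (real n)) x * norm (g x) :: real"
  have "(\<lambda>n. integral\<^sup>L M (?s n)) \<longlonglongrightarrow> integral\<^sup>L M (\<lambda>x. 0)"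
  proof (rule integral_dominated_convergence[where w="\<lambda>x. norm (g x)"])
    show "(\<lambda>x. 0::real) \<in> borel_measurable M" by simp
    show "?s n \<in> borel_measurable M" for n
      using ig by (intro borel_measurable_times borel_measurable_indicator bx_sets) (auto simp: borel_measurable_integrable)
    show "integrable M (\<lambda>x. norm (g x))" using ig by simp
    show "AE x in M. (\<lambda>n. ?s n x) \<longlonglongrightarrow> 0"
    proof (rule AE_I2)
      fix x
      have "\<forall>\<^sub>F n in sequentially. ?s n x = 0"
      proof -
        obtain N :: nat where N: "norm x \<le> real N" using real_arch_simple by blast
        have "?s n x = 0" if "n \<ge> N" for n
        proof -
          have "x \<in> bx (real n)" unfolding bx_mem
            using N that Basis_le_norm order_trans by (metis of_nat_le_iff) 
          then show ?thesis by simp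
        qed
        then show ?thesis by (auto simp: eventually_sequentially)
      qed
      then show "(\<lambda>n. ?s n x) \<longlonglongrightarrow> 0" by (rule tendsto_eventually)
    qed
    show "AE x in M. norm (?s n x) \<le> norm (g x)" for n
      by (auto simp: indicator_def)
  qed
  then have "\<forall>\<^sub>F n in sequentially. integral\<^sup>L M (?s n) < \<epsilon>"
    using assms by (auto dest: order_tendstoD(2))
  then obtain N where "\<And>n. n \<ge> N \<Longrightarrow> integral\<^sup>L M (?s n) < \<epsilon>" by (auto simp: eventually_sequentially)
  then have "integral\<^sup>L M (?s (Suc N)) < \<epsilon>" by (meson le_SucI order_refl)
  then show ?thesis by (intro exI[of _ "real (Suc N)"]) auto
qed

end



lemma uu_inner: "(i::'n::euclidean_space) \<in> Basis \<Longrightarrow> uu w x \<bullet> i = sin (w * (x \<bullet> i))"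
  unfolding uu_def by (simp add: inner_sum_left inner_Basis if_distrib cong: if_cong)

context fz begin

lemma approx_bound:
  fixes f :: "'n \<Rightarrow> real"
  assumes cf: "continuous_on UNIV f" and fB: "\<And>x. \<bar>f x\<bar> \<le> B" and e: "0 < \<epsilon>"
  shows "norm (LINT x|M. complex_of_real (f x) * g x) \<le> \<epsilon> * (LINT x|M. norm (g x)) + (2*B+\<epsilon>) * \<epsilon>"
proof -
  have B0: "0 \<le> B" using fB[of 0] by simp
  obtain R where R0: "R > 0" and tailR: "(LINT x|M. indicator (- bx R) x * norm (g x)) < \<epsilon>"
    using tail[OF e] by auto
  define \<omega> where "\<omega> = pi / (2*R)"
  have \<omega>0: "\<omega> > 0" using R0 by (simp add: \<omega>_def)
  define cl :: "real \<Rightarrow> real" where "cl t = max (-1) (min 1 t)" for t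
  define wf :: "'n \<Rightarrow> 'n" where "wf s = (\<Sum>i\<in>Basis. (arcsin (cl (s \<bullet> i)) / \<omega>) *\<^sub>R i)" for s
  define G where "G s = f (wf s)" for s
  have cwf: "continuous_on UNIV wf"
    unfolding wf_def cl_def using \<omega>0 by (intro continuous_intros) auto
  have cG: "continuous_on UNIV G"
    unfolding G_def using continuous_on_compose[OF cwf, of f] cf
    by (auto simp: comp_def intro: continuous_on_subset)
  obtain q where q: "real_polynomial_function q" and qG: "\<And>s. s \<in> cbox (-One) One \<Longrightarrow> \<bar>G s - q s\<bar> < \<epsilon>"
    using Stone_Weierstrass_real_polynomial_function[OF compact_cbox continuous_on_subset[OF cG] e] by blast
  define Q where "Q x = complex_of_real (q (uu \<omega> x))" for x
  have Qt: "Q \<in> trigp" unfolding Q_def by (rule trigp_poly[OF q])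
  have uin: "uu \<omega> x \<in> cbox (-One) One" for x
    by (auto simp: mem_box uu_inner inner_Basis)
  have Qb: "\<bar>q (uu \<omega> x)\<bar> \<le> B + \<epsilon>" for x
    using qG[OF uin[of x]] fB[of "wf (uu \<omega> x)"] unfolding G_def by linarith
  have winv: "wf (uu \<omega> x) = x" if "x \<in> bx R" for x
  proof -
    have "arcsin (cl (uu \<omega> x \<bullet> i)) / \<omega> = x \<bullet> i" if i: "i \<in> Basis" for i
    proof -
      have "cl (uu \<omega> x \<bullet> i) = sin (\<omega> * (x \<bullet> i))"
        using i by (simp add: uu_inner cl_def)
      moreover have "\<bar>\<omega> * (x \<bullet> i)\<bar> \<le> pi/2"
      proof -
        have "\<bar>x \<bullet> i\<bar> \<le> R" using \<open>x \<in> bx R\<close> i bx_mem by blast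
        then have "\<omega> * \<bar>x \<bullet> i\<bar> \<le> \<omega> * R" using \<omega>0 by (simp add: mult_left_mono)
        also have "\<omega> * R = pi/2" using R0 by (simp add: \<omega>_def)
        finally show ?thesis using \<omega>0 by (simp add: abs_mult)
      qed
      ultimately have "arcsin (cl (uu \<omega> x \<bullet> i)) = \<omega> * (x \<bullet> i)"
        by (simp add: arcsin_sin abs_le_iff)
      then show ?thesis using \<omega>0 by simp
    qed
    then show ?thesis unfolding wf_def by (simp add: euclidean_representation)
  qed
  have Qc: "\<bar>f x - q (uu \<omega> x)\<bar> < \<epsilon>" if "x \<in> bx R" for x
    using qG[OF uin[of x]] winv[OF that] unfolding G_def by simp
  have pw: "\<bar>f x - q (uu \<omega> x)\<bar> \<le> \<epsilon> + (2*B+\<epsilon>) * indicator (- bx R) x" for x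
  proof (cases "x \<in> bx R")
    case True then show ?thesis using Qc[OF True] by simp
  next
    case False then show ?thesis using fB[of x] Qb[of x] e by (simp add: abs_le_iff)
  qed
  have mf: "(\<lambda>x. complex_of_real (f x)) \<in> borel_measurable M"
    using cf by (intro meas borel_measurable_continuous_onI continuous_intros) 
  have iQ: "integrable M (\<lambda>x. Q x * g x)" by (rule trig_int[OF Qt])
  have iF: "integrable M (\<lambda>x. complex_of_real (f x) * g x)"
    using fB by (intro int_bmul[OF ig mf]) simp
  have "(LINT x|M. complex_of_real (f x) * g x) = (LINT x|M. complex_of_real (f x) * g x) - (LINT x|M. Q x * g x)"
    using trig_int0[OF Qt] by simp
  also have "\<dots> = (LINT x|M. complex_of_real (f x - q (uu \<omega> x)) * g x)"
    using iQ iF by (simp add: Q_def left_diff_distrib)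
  finally have eq: "(LINT x|M. complex_of_real (f x) * g x) = (LINT x|M. complex_of_real (f x - q (uu \<omega> x)) * g x)" .
  have iD: "integrable M (\<lambda>x. complex_of_real (f x - q (uu \<omega> x)) * g x)"
    using Bochner_Integration.integrable_diff[OF iF iQ] by (simp add: Q_def left_diff_distrib)
  have iN: "integrable M (\<lambda>x. norm (g x))" using ig by simp
  have iI: "integrable M (\<lambda>x. indicator (- bx R) x * norm (g x))"
    using integrable_real_mult_indicator[OF bx_sets iN] by (simp add: mult.commute)
  have "norm (LINT x|M. complex_of_real (f x - q (uu \<omega> x)) * g x)
      \<le> (LINT x|M. \<epsilon> * norm (g x) + (2*B+\<epsilon>) * (indicator (- bx R) x * norm (g x)))"
  proof (rule Bochner_Integration.integral_norm_bound_integral[OF iD])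
    show "integrable M (\<lambda>x. \<epsilon> * norm (g x) + (2*B+\<epsilon>) * (indicator (- bx R) x * norm (g x)))"
      using iN iI by simp
    fix x
    have "norm (complex_of_real (f x - q (uu \<omega> x)) * g x) = \<bar>f x - q (uu \<omega> x)\<bar> * norm (g x)"
      by (simp only: norm_mult norm_of_real)
    also have "\<dots> \<le> (\<epsilon> + (2*B+\<epsilon>) * indicator (- bx R) x) * norm (g x)"
      by (intro mult_right_mono pw) auto
    finally show "norm (complex_of_real (f x - q (uu \<omega> x)) * g x) \<le> \<epsilon> * norm (g x) + (2*B+\<epsilon>) * (indicator (- bx R) x * norm (g x))"
      by (simp add: algebra_simps)
  qed
  also have "\<dots> = \<epsilon> * (LINT x|M. norm (g x)) + (2*B+\<epsilon>) * (LINT x|M. indicator (- bx R) x * norm (g x))"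
    using iN iI by simp
  also have "\<dots> \<le> \<epsilon> * (LINT x|M. norm (g x)) + (2*B+\<epsilon>) * \<epsilon>"
    using tailR B0 e by (intro add_left_mono mult_left_mono) auto
  finally show ?thesis using eq by simp
qed

end



context fz begin

lemma cont_zero:
  fixes f :: "'n \<Rightarrow> real"
  assumes cf: "continuous_on UNIV f" and fB: "\<And>x. \<bar>f x\<bar> \<le> B"
  shows "(LINT x|M. complex_of_real (f x) * g x) = 0"
proof (rule ccontr)
  let ?a = "norm (LINT x|M. complex_of_real (f x) * g x)"
  let ?G = "LINT x|M. norm (g x)"
  assume "(LINT x|M. complex_of_real (f x) * g x) \<noteq> 0"
  then have a0: "?a > 0" by simp
  have B0: "0 \<le> B" using fB[of 0] by simp
  have G0: "0 \<le> ?G" by simp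
  define C where "C = ?G + 2*B + 1"
  have C0: "C > 0" unfolding C_def using B0 G0 by linarith
  define \<epsilon> where "\<epsilon> = min 1 (?a / (2*C))"
  have e0: "\<epsilon> > 0" using a0 C0 by (simp add: \<epsilon>_def)
  have e1: "\<epsilon> \<le> 1" by (simp add: \<epsilon>_def)
  have "?a \<le> \<epsilon> * ?G + (2*B+\<epsilon>) * \<epsilon>" by (rule approx_bound[OF cf fB e0])
  also have "\<dots> \<le> \<epsilon> * C"
    using e1 e0 B0 by (simp add: C_def algebra_simps mult_left_le)
  also have "\<dots> \<le> ?a / (2*C) * C" using C0 by (intro mult_right_mono) (auto simp: \<epsilon>_def)
  also have "\<dots> = ?a / 2" using C0 by simp
  finally show False using a0 by simp
qed

lemma ig_ind: assumes "A \<in> sets M" shows "integrable M (\<lambda>x. indicator A x *\<^sub>R g x)"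
  using integrable_mult_indicator[OF assms ig] .

lemma open_zero:
  assumes "open U"
  shows "(LINT x|M. indicator U x *\<^sub>R g x) = 0"
proof (cases "U = UNIV")
  case True
  then show ?thesis using cont_zero[of "\<lambda>x. 1" 1] by simp
next
  case False
  have cl: "closed (- U)" "- U \<noteq> {}" using assms False by auto
  let ?f = "\<lambda>m::nat. \<lambda>x. min 1 (real m * infdist x (- U))"
  let ?s = "\<lambda>m x. complex_of_real (?f m x) * g x"
  have z: "integral\<^sup>L M (?s m) = 0" for m
    by (rule cont_zero[where B=1]) (auto intro!: continuous_intros simp: infdist_nonneg)
  have "(\<lambda>m. integral\<^sup>L M (?s m)) \<longlonglongrightarrow> (LINT x|M. indicator U x *\<^sub>R g x)"
  proof (rule integral_dominated_convergence[where w="\<lambda>x. norm (g x)"])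
    show "(\<lambda>x. indicator U x *\<^sub>R g x) \<in> borel_measurable M"
      using ig_ind[of U] assms sM by (auto simp: borel_open)
    show "?s m \<in> borel_measurable M" for m
      by (intro borel_measurable_times[OF meas[OF borel_measurable_continuous_onI] borel_measurable_integrable[OF ig]])
         (auto intro!: continuous_intros)
    show "integrable M (\<lambda>x. norm (g x))" using ig by simp
    show "AE x in M. norm (?s m x) \<le> norm (g x)" for m
      by (intro AE_I2) (auto simp: norm_mult infdist_nonneg intro!: mult_left_le_one_le)
    show "AE x in M. (\<lambda>m. ?s m x) \<longlonglongrightarrow> indicator U x *\<^sub>R g x"
    proof (rule AE_I2)
      fix x
      show "(\<lambda>m. ?s m x) \<longlonglongrightarrow> indicator U x *\<^sub>R g x"
      proof (cases "x \<in> U")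
        case True
        then have d: "infdist x (- U) > 0" using infdist_pos_not_in_closed[OF cl] by simp
        obtain N :: nat where N: "1 / infdist x (- U) \<le> real N" using real_arch_simple by blast
        have "?s m x = indicator U x *\<^sub>R g x" if "m \<ge> N" for m
        proof -
          have "1 \<le> real N * infdist x (- U)" using N d by (simp add: field_simps)
          also have "\<dots> \<le> real m * infdist x (- U)" using that d by (intro mult_right_mono) auto
          finally show ?thesis using True by simp
        qed
        then show ?thesis by (intro tendsto_eventually) (auto simp: eventually_sequentially)
      next
        case False
        then show ?thesis by simp
      qed
    qed
  qed
  then show ?thesis using z by (simp add: LIMSEQ_const_iff)
qed

lemma borel_zero:
  assumes "A \<in> sets borel"
  shows "(LINT x|M. indicator A x *\<^sub>R g x) = 0"
proof -
  have 1: "A \<in> sigma_sets UNIV {S. open S}" using assms by (simp add: sets_borel)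
  have 2: "Int_stable {S::'n set. open S}" by (auto simp: Int_stable_def)
  have 3: "{S::'n set. open S} \<subseteq> Pow UNIV" by auto
  from 2 3 1 show ?thesis
  proof (induction rule: sigma_sets_induct_disjoint)
    case (basic A) then show ?case using open_zero by simp
  next
    case empty then show ?case by simp
  next
    case (compl A)
    have AM: "A \<in> sets M" using compl(1) sM by (simp add: sets_borel)
    have "(LINT x|M. indicator (UNIV - A) x *\<^sub>R g x) = (LINT x|M. g x - indicator A x *\<^sub>R g x)"
      by (intro Bochner_Integration.integral_cong) (auto simp: indicator_def)
    also have "\<dots> = (LINT x|M. g x) - (LINT x|M. indicator A x *\<^sub>R g x)"
      using ig ig_ind[OF AM] by simp
    also have "(LINT x|M. g x) = 0" using open_zero[of UNIV] by simp
    finally show ?case using compl by simp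
  next
    case (union A)
    have AM: "A i \<in> sets M" for i using union(2) sM by (auto simp: sets_borel)
    have UM: "(\<Union>i<n. A i) \<in> sets M" for n using AM by auto
    have part: "(LINT x|M. indicator (\<Union>i<n. A i) x *\<^sub>R g x) = 0" for n
    proof -
      have "(LINT x|M. indicator (\<Union>i<n. A i) x *\<^sub>R g x) = (LINT x|M. (\<Sum>i<n. indicator (A i) x *\<^sub>R g x))"
      proof (intro Bochner_Integration.integral_cong refl)
        fix x
        have "indicator (\<Union>i<n. A i) x = (\<Sum>i<n. indicator (A i) x :: real)"
          using union(1) by (intro indicator_UN_disjoint) (auto simp: disjoint_family_on_def)
        then show "indicator (\<Union>i<n. A i) x *\<^sub>R g x = (\<Sum>i<n. indicator (A i) x *\<^sub>R g x)"
          by (simp add: scaleR_sum_left)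
      qed
      also have "\<dots> = (\<Sum>i<n. (LINT x|M. indicator (A i) x *\<^sub>R g x))"
        using ig_ind[OF AM] by (intro Bochner_Integration.integral_sum) auto
      also have "\<dots> = 0" using union(3) by simp
      finally show ?thesis .
    qed
    have "(\<lambda>n. LINT x|M. indicator (\<Union>i<n. A i) x *\<^sub>R g x) \<longlonglongrightarrow> (LINT x|M. indicator (\<Union>i. A i) x *\<^sub>R g x)"
    proof (rule integral_dominated_convergence[where w="\<lambda>x. norm (g x)"])
      have "(\<Union>i. A i) \<in> sets M" using AM by auto
      then show "(\<lambda>x. indicator (\<Union>i. A i) x *\<^sub>R g x) \<in> borel_measurable M"
        using ig_ind by (simp add: borel_measurable_integrable)
      show "(\<lambda>x. indicator (\<Union>i<n. A i) x *\<^sub>R g x) \<in> borel_measurable M" for n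
        using ig_ind[OF UM] by (simp add: borel_measurable_integrable)
      show "integrable M (\<lambda>x. norm (g x))" using ig by simp
      show "AE x in M. (\<lambda>n. indicator (\<Union>i<n. A i) x *\<^sub>R g x) \<longlonglongrightarrow> indicator (\<Union>i. A i) x *\<^sub>R g x"
        by (intro AE_I2 tendsto_scaleR LIMSEQ_indicator_UN tendsto_const)
      show "AE x in M. norm (indicator (\<Union>i<n. A i) x *\<^sub>R g x) \<le> norm (g x)" for n
        by (intro AE_I2) (auto simp: indicator_def)
    qed
    then show ?case using part by (simp add: LIMSEQ_const_iff)
  qed
qed

end



lemma push_pos:
  fixes M :: "'n::euclidean_space measure" and f :: "'n \<Rightarrow> real" and T :: "'n \<Rightarrow> 'k::euclidean_space"
  assumes sM: "sets M = sets borel" and fin: "finite_measure M" and fi: "integrable M f"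
    and f0: "\<And>x. 0 \<le> f x" and TB: "T \<in> borel_measurable borel"
  shows "\<exists>r. r \<in> borel_measurable borel \<and> (\<forall>y. 0 \<le> r y) \<and> integrable (distr M borel T) r \<and>
     (\<forall>gg::'k \<Rightarrow> complex. gg \<in> borel_measurable borel \<longrightarrow>
        (LINT y|distr M borel T. r y *\<^sub>R gg y) = (LINT x|M. f x *\<^sub>R gg (T x)))"
proof -
  have TM[measurable]: "T \<in> measurable M borel" using TB by (simp add: measurable_cong_sets[OF sM refl])
  have fM[measurable]: "f \<in> borel_measurable M" using fi by (simp add: borel_measurable_integrable)
  define M' where "M' = distr M borel T"
  define D where "D = density M (\<lambda>x. ennreal (f x))"
  define N where "N = distr D borel T"
  interpret FM: finite_measure M by (rule fin)
  interpret M': finite_measure M' unfolding M'_def by (rule FM.finite_measure_distr[OF TM])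
  have sD: "sets D = sets M" by (simp add: D_def)
  have TD[measurable]: "T \<in> measurable D borel" using TM by (simp add: measurable_cong_sets[OF sD refl])
  have finD: "finite_measure D"
  proof (rule finite_measureI)
    have "emeasure D (space D) = (\<integral>\<^sup>+ x. ennreal (f x) * indicator (space M) x \<partial>M)"
      by (simp add: D_def emeasure_density)
    also have "\<dots> = (\<integral>\<^sup>+ x. ennreal (f x) \<partial>M)"
      by (intro nn_integral_cong) (auto simp: indicator_def)
    also have "\<dots> = ennreal (integral\<^sup>L M f)" using fi f0 by (intro nn_integral_eq_integral) auto
    finally show "emeasure D (space D) \<noteq> \<infinity>" by simp
  qed
  interpret FD: finite_measure D by (rule finD)
  interpret N: finite_measure N unfolding N_def by (rule FD.finite_measure_distr[OF TD])
  have sN: "sets N = sets M'" by (simp add: N_def M'_def)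
  have ac: "absolutely_continuous M' N"
    unfolding absolutely_continuous_def
  proof
    fix A assume A: "A \<in> null_sets M'"
    then have Ab: "A \<in> sets borel" and "emeasure M (T -` A \<inter> space M) = 0"
      by (auto simp: M'_def emeasure_distr null_sets_def)
    then have "T -` A \<inter> space M \<in> null_sets M" using TM by (auto simp: null_sets_def)
    then have "T -` A \<inter> space M \<in> null_sets D"
      using absolutely_continuousI_density[of "\<lambda>x. ennreal (f x)" M]
      unfolding D_def absolutely_continuous_def by auto
    then show "A \<in> null_sets N"
      using Ab by (auto simp: N_def null_sets_def emeasure_distr sD sets_eq_imp_space_eq[OF sD])
  qed
  define r0 where "r0 = RN_deriv M' N"
  have dN: "density M' r0 = N" unfolding r0_def by (rule M'.density_RN_deriv[OF ac sN])
  have fin_r0: "AE y in M'. r0 y \<noteq> \<infinity>"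
    unfolding r0_def by (rule M'.RN_deriv_finite[OF _ ac sN]) unfold_locales
  have r0M: "r0 \<in> borel_measurable M'" unfolding r0_def by simp
  define r where "r y = enn2real (r0 y)" for y
  have sM': "sets M' = sets borel" by (simp add: M'_def)
  have rB: "r \<in> borel_measurable borel"
    using r0M unfolding r_def by (simp add: measurable_cong_sets[OF sM' refl])
  have rM': "r \<in> borel_measurable M'" using rB by (simp add: measurable_cong_sets[OF sM' refl])
  have dN': "density M' (\<lambda>y. ennreal (r y)) = N"
  proof -
    have "density M' (\<lambda>y. ennreal (r y)) = density M' r0"
    proof (rule density_cong)
      show "AE y in M'. ennreal (r y) = r0 y" using fin_r0 by eventually_elim (simp add: r_def less_top)
    qed (use r0M rM' in auto)
    then show ?thesis using dN by simp
  qed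
  have r0': "\<And>y. 0 \<le> r y" by (simp add: r_def)
  have "integrable N (\<lambda>_. 1::real)" by simp
  then have "integrable M' (\<lambda>y. r y *\<^sub>R (1::real))"
    using integrable_density[of "\<lambda>_. 1::real" M' r] rM' r0' dN' by simp
  then have ir: "integrable M' r" by simp
  have main: "(LINT y|M'. r y *\<^sub>R gg y) = (LINT x|M. f x *\<^sub>R gg (T x))"
    if gg: "gg \<in> borel_measurable borel" for gg :: "'k \<Rightarrow> complex"
  proof -
    have ggM': "gg \<in> borel_measurable M'" using gg by (simp add: measurable_cong_sets[OF sM' refl])
    have "(LINT y|M'. r y *\<^sub>R gg y) = integral\<^sup>L (density M' (\<lambda>y. ennreal (r y))) gg"
      using ggM' rM' r0' by (subst integral_density) auto
    also have "\<dots> = integral\<^sup>L N gg" using dN' by simp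
    also have "\<dots> = (LINT x|D. gg (T x))" unfolding N_def using gg by (intro integral_distr) auto
    also have "\<dots> = (LINT x|M. f x *\<^sub>R gg (T x))"
      unfolding D_def using f0 measurable_compose[OF TM gg] by (subst integral_density) (auto simp: comp_def)
    finally show ?thesis .
  qed
  show ?thesis using rB r0' ir main unfolding M'_def by blast
qed



lemma int_scaleR_bdd:
  fixes gg :: "'a \<Rightarrow> complex" and a :: "'a \<Rightarrow> real"
  assumes "integrable M a" "gg \<in> borel_measurable M" "\<And>y. norm (gg y) \<le> B"
  shows "integrable M (\<lambda>x. a x *\<^sub>R gg x)"
proof (rule Bochner_Integration.integrable_bound[of _ "\<lambda>x. \<bar>B\<bar> * a x"])
  show "integrable M (\<lambda>x. \<bar>B\<bar> * a x)" using assms(1) by simp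
  show "(\<lambda>x. a x *\<^sub>R gg x) \<in> borel_measurable M"
    using assms(1,2) by (simp add: borel_measurable_integrable)
  show "AE x in M. norm (a x *\<^sub>R gg x) \<le> norm (\<bar>B\<bar> * a x)"
  proof (intro AE_I2)
    fix x
    have "\<bar>a x\<bar> * norm (gg x) \<le> \<bar>a x\<bar> * \<bar>B\<bar>"
      using assms(3)[of x] by (intro mult_left_mono) auto
    then show "norm (a x *\<^sub>R gg x) \<le> norm (\<bar>B\<bar> * a x)" by (simp add: abs_mult mult.commute)
  qed
qed

lemma four_split:
  fixes gg :: "'a \<Rightarrow> complex" and a1 a2 a3 a4 :: "'a \<Rightarrow> real"
  assumes "integrable M a1" "integrable M a2" "integrable M a3" "integrable M a4"
    "gg \<in> borel_measurable M" "\<And>y. norm (gg y) \<le> B"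
  shows "(LINT x|M. gg x * (complex_of_real (a1 x - a2 x) + \<i> * complex_of_real (a3 x - a4 x))) =
    (LINT x|M. a1 x *\<^sub>R gg x) - (LINT x|M. a2 x *\<^sub>R gg x) + \<i> * ((LINT x|M. a3 x *\<^sub>R gg x) - (LINT x|M. a4 x *\<^sub>R gg x))"
proof -
  note i = int_scaleR_bdd[OF assms(1) assms(5,6)] int_scaleR_bdd[OF assms(2) assms(5,6)]
     int_scaleR_bdd[OF assms(3) assms(5,6)] int_scaleR_bdd[OF assms(4) assms(5,6)]
  have "(LINT x|M. gg x * (complex_of_real (a1 x - a2 x) + \<i> * complex_of_real (a3 x - a4 x))) =
     (LINT x|M. (a1 x *\<^sub>R gg x - a2 x *\<^sub>R gg x) + \<i> * (a3 x *\<^sub>R gg x - a4 x *\<^sub>R gg x))"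
    by (intro Bochner_Integration.integral_cong refl) (simp add: scaleR_conv_of_real algebra_simps)
  also have "\<dots> = (LINT x|M. a1 x *\<^sub>R gg x) - (LINT x|M. a2 x *\<^sub>R gg x) + \<i> * ((LINT x|M. a3 x *\<^sub>R gg x) - (LINT x|M. a4 x *\<^sub>R gg x))"
    using i by simp
  finally show ?thesis .
qed

lemma pushforward:
  fixes M :: "'n::euclidean_space measure" and k :: "'n \<Rightarrow> complex" and T :: "'n \<Rightarrow> 'k::euclidean_space"
  assumes sM: "sets M = sets borel" and fin: "finite_measure M" and ik: "integrable M k"
    and TB: "T \<in> borel_measurable borel"
  shows "\<exists>M' h'. finite_cmeasure M' h' \<and> (\<forall>gg. gg \<in> borel_measurable borel \<longrightarrow> (\<exists>B. \<forall>y. norm (gg y) \<le> B) \<longrightarrow>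
            (LINT y|M'. gg y * h' y) = (LINT x|M. gg (T x) * k x))"
proof -
  have TM[measurable]: "T \<in> measurable M borel" using TB by (simp add: measurable_cong_sets[OF sM refl])
  define f1 where "f1 x = max 0 (Re (k x))" for x
  define f2 where "f2 x = max 0 (- Re (k x))" for x
  define f3 where "f3 x = max 0 (Im (k x))" for x
  define f4 where "f4 x = max 0 (- Im (k x))" for x
  have if1: "integrable M f1" "integrable M f2" "integrable M f3" "integrable M f4"
    using ik unfolding f1_def f2_def f3_def f4_def by auto
  have kd: "k x = complex_of_real (f1 x - f2 x) + \<i> * complex_of_real (f3 x - f4 x)" for x
    by (simp add: f1_def f2_def f3_def f4_def complex_eq_iff max_def)
  obtain r1 where r1: "r1 \<in> borel_measurable borel" "\<forall>y. 0 \<le> r1 y" "integrable (distr M borel T) r1"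
    "\<forall>gg::'k \<Rightarrow> complex. gg \<in> borel_measurable borel \<longrightarrow> (LINT y|distr M borel T. r1 y *\<^sub>R gg y) = (LINT x|M. f1 x *\<^sub>R gg (T x))"
    using push_pos[OF sM fin if1(1) _ TB] by (auto simp: f1_def)
  obtain r2 where r2: "r2 \<in> borel_measurable borel" "\<forall>y. 0 \<le> r2 y" "integrable (distr M borel T) r2"
    "\<forall>gg::'k \<Rightarrow> complex. gg \<in> borel_measurable borel \<longrightarrow> (LINT y|distr M borel T. r2 y *\<^sub>R gg y) = (LINT x|M. f2 x *\<^sub>R gg (T x))"
    using push_pos[OF sM fin if1(2) _ TB] by (auto simp: f2_def)
  obtain r3 where r3: "r3 \<in> borel_measurable borel" "\<forall>y. 0 \<le> r3 y" "integrable (distr M borel T) r3"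
    "\<forall>gg::'k \<Rightarrow> complex. gg \<in> borel_measurable borel \<longrightarrow> (LINT y|distr M borel T. r3 y *\<^sub>R gg y) = (LINT x|M. f3 x *\<^sub>R gg (T x))"
    using push_pos[OF sM fin if1(3) _ TB] by (auto simp: f3_def)
  obtain r4 where r4: "r4 \<in> borel_measurable borel" "\<forall>y. 0 \<le> r4 y" "integrable (distr M borel T) r4"
    "\<forall>gg::'k \<Rightarrow> complex. gg \<in> borel_measurable borel \<longrightarrow> (LINT y|distr M borel T. r4 y *\<^sub>R gg y) = (LINT x|M. f4 x *\<^sub>R gg (T x))"
    using push_pos[OF sM fin if1(4) _ TB] by (auto simp: f4_def)
  define M' where "M' = distr M borel T"
  define h' where "h' y = complex_of_real (r1 y - r2 y) + \<i> * complex_of_real (r3 y - r4 y)" for y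
  interpret FM: finite_measure M by (rule fin)
  have "finite_measure M'" unfolding M'_def by (rule FM.finite_measure_distr[OF TM])
  moreover have "integrable M' h'"
    using r1(3) r2(3) r3(3) r4(3) unfolding h'_def M'_def by auto
  ultimately have fc: "finite_cmeasure M' h'" by (simp add: finite_cmeasure_def M'_def)
  have eq: "(LINT y|M'. gg y * h' y) = (LINT x|M. gg (T x) * k x)"
    if gg: "gg \<in> borel_measurable borel" and B: "\<And>y. norm (gg y) \<le> B" for gg B
  proof -
    have ggM: "gg \<in> borel_measurable M'" using gg by (simp add: M'_def)
    have ggT: "(\<lambda>x. gg (T x)) \<in> borel_measurable M" using measurable_compose[OF TM gg] by (simp add: comp_def)
    have "(LINT y|M'. gg y * h' y) = (LINT y|M'. r1 y *\<^sub>R gg y) - (LINT y|M'. r2 y *\<^sub>R gg y) + \<i> * ((LINT y|M'. r3 y *\<^sub>R gg y) - (LINT y|M'. r4 y *\<^sub>R gg y))"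
      unfolding h'_def using r1(3) r2(3) r3(3) r4(3) ggM B unfolding M'_def by (intro four_split) auto
    also have "\<dots> = (LINT x|M. f1 x *\<^sub>R gg (T x)) - (LINT x|M. f2 x *\<^sub>R gg (T x)) + \<i> * ((LINT x|M. f3 x *\<^sub>R gg (T x)) - (LINT x|M. f4 x *\<^sub>R gg (T x)))"
      using r1(4) r2(4) r3(4) r4(4) gg unfolding M'_def by simp
    also have "\<dots> = (LINT x|M. gg (T x) * (complex_of_real (f1 x - f2 x) + \<i> * complex_of_real (f3 x - f4 x)))"
      using if1 ggT B by (intro four_split[symmetric]) auto
    also have "\<dots> = (LINT x|M. gg (T x) * k x)" by (simp add: kd)
    finally show ?thesis .
  qed
  show ?thesis using fc eq by blast
qed



theorem mainTheorem9:
  fixes A :: "'n::euclidean_space set"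
    and M :: "'n measure" and h :: "'n \<Rightarrow> complex"
    and L :: "'k::euclidean_space \<Rightarrow> 'n"
  assumes "finite_cmeasure M h"
    and "cspectrum M h \<subseteq> A"
    and "linear L" and "\<And>y. norm (L y) = norm y"
    and "\<And>a. riesz_set {y. L y + a \<in> A}"
    and "F \<in> sets borel"
    and "L -` (orth_proj (range L) ` F) \<in> null_sets lebesgue"
  shows "cmeasure_val M h F = 0"
proof -
  have sM: "sets M = sets borel" and fin: "finite_measure M" and ih: "integrable M h"
    using assms(1) by (auto simp: finite_cmeasure_def)
  have lin: "linear L" by (rule assms(3))
  define T where "T = adjoint L"
  have linT: "linear T" unfolding T_def by (rule adjoint_linear[OF lin])
  have TB: "T \<in> borel_measurable borel"
    by (intro borel_measurable_continuous_onI linear_continuous_on linear_conv_bounded_linear[THEN iffD1, OF linT])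
  have TM: "T \<in> measurable M borel" using TB by (simp add: measurable_cong_sets[OF sM refl])
  have adj: "\<eta> \<bullet> T x = L \<eta> \<bullet> x" for \<eta> x unfolding T_def by (rule adjoint_works[OF lin])
  have inn: "L y \<bullet> L z = y \<bullet> z" for y z
  proof -
    have "norm (L (y + z)) ^ 2 = norm (y + z) ^ 2" using assms(4) by simp
    then have "(L y + L z) \<bullet> (L y + L z) = (y + z) \<bullet> (y + z)"
      by (simp add: power2_norm_eq_inner linear_add[OF lin])
    moreover have "L y \<bullet> L y = y \<bullet> y" "L z \<bullet> L z = z \<bullet> z"
      using assms(4)[of y] assms(4)[of z] by (simp_all add: power2_norm_eq_inner[symmetric])
    ultimately show ?thesis by (simp add: inner_add inner_commute)
  qed
  have Linj: "L y = L z \<Longrightarrow> y = z" for y z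
  proof -
    assume "L y = L z"
    then have "L (y - z) = 0" by (simp add: linear_diff[OF lin])
    then have "norm (y - z) = 0" using assms(4)[of "y - z"] by simp
    then show "y = z" by simp
  qed
  have proj: "orth_proj (range L) x = L (T x)" for x
    unfolding orth_proj_def
  proof (rule the_equality)
    have "(x - L (T x)) \<bullet> L z = 0" for z
      using adj[of z x] inn[of "T x" z] by (simp add: inner_diff_left inner_diff_right inner_commute)
    then show "L (T x) \<in> range L \<and> (\<forall>w\<in>range L. (x - L (T x)) \<bullet> w = 0)" by auto
    fix v assume v: "v \<in> range L \<and> (\<forall>w\<in>range L. (x - v) \<bullet> w = 0)"
    then obtain y where y: "v = L y" by auto
    have d: "v - L (T x) = L (y - T x)" using y by (simp add: linear_diff[OF lin])
    have "(x - v) \<bullet> (v - L (T x)) = 0" using v d by auto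
    moreover have "(x - L (T x)) \<bullet> (v - L (T x)) = 0"
      using d adj[of "y - T x" x] inn[of "T x" "y - T x"] by (simp add: inner_diff_left inner_commute)
    ultimately have "(v - L (T x)) \<bullet> (v - L (T x)) = 0" by (simp add: inner_diff_left)
    then show "v = L (T x)" by simp
  qed
  have "L -` (orth_proj (range L) ` F) = T ` F"
    using Linj by (auto simp: proj)
  then have "T ` F \<in> null_sets (completion lborel)" using assms(7) by simp
  then obtain N where N: "N \<in> null_sets lborel" and FN: "T ` F \<subseteq> N"
    by (auto simp: null_sets_completion_iff2)
  have Nb: "N \<in> sets borel" and N0: "emeasure lborel N = 0" using N by auto
  have indNB: "(\<lambda>y. complex_of_real (indicator N y)) \<in> borel_measurable borel" using Nb by simp
  have key: "(LINT x|M. complex_of_real (indicator N (T x)) * (exp (2 * pi * \<i> * complex_of_real (c \<bullet> x)) * h x)) = 0" for c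
  proof -
    define k where "k x = exp (2 * pi * \<i> * complex_of_real (c \<bullet> x)) * h x" for x
    have ik: "integrable M k" unfolding k_def
    proof (rule int_bmul[OF ih])
      show "(\<lambda>x. exp (2 * pi * \<i> * complex_of_real (c \<bullet> x))) \<in> borel_measurable M"
        by (simp add: measurable_cong_sets[OF sM refl] borel_measurable_continuous_onI continuous_intros)
      show "norm (exp (2 * pi * \<i> * complex_of_real (c \<bullet> x))) \<le> 1" for x by (simp add: norm_exp)
    qed
    obtain M' h' where fc: "finite_cmeasure M' h'" and pf: "\<And>gg. gg \<in> borel_measurable borel \<Longrightarrow> (\<exists>B. \<forall>y. norm (gg y) \<le> B) \<Longrightarrow>
            (LINT y|M'. gg y * h' y) = (LINT x|M. gg (T x) * k x)"
      using pushforward[OF sM fin ik TB] by blast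
    have cf: "cfourier M' h' \<eta> = cfourier M h (L \<eta> - c)" for \<eta>
    proof -
      have "cfourier M' h' \<eta> = (LINT x|M. exp (- (2 * pi * \<i>) * complex_of_real (\<eta> \<bullet> T x)) * k x)"
        unfolding cfourier_def
        by (rule pf) (auto simp: norm_exp intro!: borel_measurable_continuous_onI continuous_intros)
      also have "\<dots> = cfourier M h (L \<eta> - c)"
        unfolding cfourier_def k_def
      proof (intro Bochner_Integration.integral_cong refl)
        fix x
        have "exp (- (2 * pi * \<i>) * complex_of_real (\<eta> \<bullet> T x)) * exp (2 * pi * \<i> * complex_of_real (c \<bullet> x))
            = exp (- (2 * pi * \<i>) * complex_of_real (\<eta> \<bullet> T x) + 2 * pi * \<i> * complex_of_real (c \<bullet> x))"
          by (rule exp_add[symmetric])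
        also have "\<dots> = exp (- (2 * pi * \<i>) * complex_of_real ((L \<eta> - c) \<bullet> x))"
          by (simp add: adj inner_diff_left algebra_simps)
        finally show "exp (- (2 * pi * \<i>) * complex_of_real (\<eta> \<bullet> T x)) * (exp (2 * pi * \<i> * complex_of_real (c \<bullet> x)) * h x) =
             exp (- (2 * pi * \<i>) * complex_of_real ((L \<eta> - c) \<bullet> x)) * h x"
          by (simp add: mult.assoc)
      qed
      finally show ?thesis .
    qed
    have "cspectrum M' h' \<subseteq> (\<lambda>\<eta>. L \<eta> - c) -` cspectrum M h"
      unfolding cspectrum_def
    proof (rule closure_minimal)
      show "{\<xi>. cfourier M' h' \<xi> \<noteq> 0} \<subseteq> (\<lambda>\<eta>. L \<eta> - c) -` closure {\<xi>. cfourier M h \<xi> \<noteq> 0}"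
        using cf closure_subset[of "{\<xi>. cfourier M h \<xi> \<noteq> 0}"] by auto
      have "continuous_on UNIV L" by (rule linear_continuous_on linear_conv_bounded_linear[THEN iffD1, OF lin])+
      then show "closed ((\<lambda>\<eta>. L \<eta> - c) -` closure {\<xi>. cfourier M h \<xi> \<noteq> 0})"
        by (intro continuous_closed_vimage closed_closure continuous_intros) (simp add: continuous_on_eq_continuous_at)
    qed
    also have "\<dots> \<subseteq> {y. L y + (- c) \<in> A}" using assms(2) by auto
    finally have "cabs_cont M' h'" using assms(5)[of "-c"] fc unfolding riesz_set_def by blast
    then have "cmeasure_val M' h' N = 0" using Nb N0 unfolding cabs_cont_def by blast
    then have "(LINT y|M'. complex_of_real (indicator N y) * h' y) = 0"
      unfolding cmeasure_val_def set_lebesgue_integral_def by (simp add: scaleR_conv_of_real)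
    moreover have "(LINT y|M'. complex_of_real (indicator N y) * h' y) = (LINT x|M. complex_of_real (indicator N (T x)) * k x)"
      using indNB by (intro pf) (auto intro!: exI[of _ 1])
    ultimately show ?thesis by (simp add: k_def)
  qed
  define g where "g x = complex_of_real (indicator N (T x)) * h x" for x
  have indNT: "(\<lambda>x. complex_of_real (indicator N (T x))) \<in> borel_measurable M"
    using measurable_compose[OF TM indNB] by (simp add: comp_def)
  have ig: "integrable M g" unfolding g_def
    by (rule int_bmul[OF ih indNT, of 1]) simp
  have hz: "(LINT x|M. exp (- (2 * pi * \<i>) * complex_of_real (\<xi> \<bullet> x)) * g x) = 0" for \<xi>
  proof -
    have "(LINT x|M. exp (- (2 * pi * \<i>) * complex_of_real (\<xi> \<bullet> x)) * g x) =
       (LINT x|M. complex_of_real (indicator N (T x)) * (exp (2 * pi * \<i> * complex_of_real ((-\<xi>) \<bullet> x)) * h x))"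
      unfolding g_def by (intro Bochner_Integration.integral_cong refl) (simp add: algebra_simps)
    also have "\<dots> = 0" by (rule key)
    finally show ?thesis .
  qed
  interpret fz M g by (rule fz.intro[OF sM fin ig hz])
  have "(LINT x|M. indicator F x *\<^sub>R g x) = 0" by (rule borel_zero[OF assms(6)])
  moreover have "(LINT x|M. indicator F x *\<^sub>R g x) = (LINT x|M. indicator F x *\<^sub>R h x)"
  proof (intro Bochner_Integration.integral_cong refl)
    fix x
    show "indicator F x *\<^sub>R g x = indicator F x *\<^sub>R h x"
      using FN by (cases "x \<in> F") (auto simp: g_def)
  qed
  ultimately show ?thesis unfolding cmeasure_val_def set_lebesgue_integral_def by simp
qed


end
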